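(* For all positive integers $m,k,r$ and all complex $z$ with $|z|<1$, $$\sum_{\substack{k_1+\cdots+k_r=k+r-1\\ k_1,\ldots,k_r\ge1}}\binom{k_r+m-2}{m-1}\mathrm{A}(k_1,\ldots,k_{r-1},k_r+m-1;z)+(-1)^r\sum_{\substack{k_1+\cdots+k_r=m+r-1\\ k_1,\ldots,k_r\ge1}}\binom{k_r+k-2}{k-1}\mathrm{A}(k_1,\ldots,k_{r-1},k_r+k-1;z)$$ $$=\sum_{j=1}^{r-1}(-1)^{j-1}\,\mathrm{A}(\{1\}_{r-1-j},m;z)\,\mathrm{A}(\{1\}_{j-1},k;z).$$
   Context: $\{1\}_a$ denotes the sequence of $a$ ones. For positive integers $k_1,\dots,k_r$ and $|z|<1$, the Kaneko–Tsumura level-two multiple polylogarithm is $\mathrm{A}(k_1,\ldots,k_r;z):=2^r\sum\frac{z^{n_r}}{n_1^{k_1}n_2^{k_2}\cdots n_r^{k_r}}$, summed over integers $1\le n_1<n_2<\cdots<n_r$ with $n_j\equiv j \pmod 2$ for every $j$. *)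

theory Defs
  imports "HOL-Analysis.Analysis"
begin

text \<open>Admissible index tuples (n_1,...,n_r), written as a list of length r:
  1 <= n_1 < n_2 < ... < n_r with n_j == j (mod 2) (indices are 1-based, so list
  position i corresponds to j = i+1).\<close>
definition KT_indices :: "nat \<Rightarrow> nat list set" where
  "KT_indices r = {ns. length ns = r \<and> sorted_wrt (<) ns \<and> (\<forall>n\<in>set ns. 1 \<le> n)
     \<and> (\<forall>i<r. ns ! i mod 2 = (i + 1) mod 2)}"

definition KT_A :: "nat list \<Rightarrow> complex \<Rightarrow> complex" where
  "KT_A ks z = 2 ^ length ks *
     (\<Sum>\<^sub>\<infinity> ns \<in> KT_indices (length ks).
        z ^ (if ns = [] then 0 else last ns) /
        (\<Prod>i<length ks. of_nat (ns ! i) ^ (ks ! i)))"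

definition compositions :: "nat \<Rightarrow> nat \<Rightarrow> nat list set" where
  "compositions n r = {ks. length ks = r \<and> (\<forall>x\<in>set ks. 1 \<le> x) \<and> sum_list ks = n}"

end

theory Submission
  imports Defs
begin


fun cr :: "nat list \<Rightarrow> nat \<Rightarrow> real" where
  "cr [] N = (if N = 0 then 1 else 0)"
| "cr (k # ks) N = (if N mod 2 = Suc (length ks) mod 2 then 2 / real N ^ k * (\<Sum>M<N. cr ks M) else 0)"

definition cc :: "nat list \<Rightarrow> nat \<Rightarrow> real" where "cc ks = cr (rev ks)"

lemma cc_Nil: "cc [] N = (if N = 0 then 1 else 0)" by (simp add: cc_def)
lemma cc_snoc: "cc (ks @ [k]) N = (if N mod 2 = Suc (length ks) mod 2 then 2 / real N ^ k * (\<Sum>M<N. cc ks M) else 0)"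
  by (simp add: cc_def)

lemma cc_support: "cc ks N \<noteq> 0 \<Longrightarrow> N mod 2 = length ks mod 2"
  by (induction ks arbitrary: N rule: rev_induct) (auto simp: cc_Nil cc_snoc split: if_splits)

lemma cc_nonneg: "cc ks N \<ge> 0"
  by (induction ks arbitrary: N rule: rev_induct) (auto simp: cc_Nil cc_snoc intro!: sum_nonneg divide_nonneg_nonneg)

definition aa :: "nat list \<Rightarrow> complex fps" where "aa ks = Abs_fps (\<lambda>N. complex_of_real (cc ks N))"

definition th :: "complex fps \<Rightarrow> complex fps" where "th f = fps_X * fps_deriv f"

lemma th_nth: "fps_nth (th f) N = of_nat N * fps_nth f N"
  by (cases N) (simp_all add: th_def fps_X_mult_nth)

lemma th_add: "th (f + g) = th f + th g" by (simp add: th_def algebra_simps)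
lemma th_diff: "th (f - g) = th f - th g" by (simp add: th_def algebra_simps)
lemma th_mult: "th (f * g) = th f * g + f * th g" by (simp add: th_def algebra_simps)
lemma th_sum: "th (sum f A) = (\<Sum>x\<in>A. th (f x))"
  by (induction A rule: infinite_finite_induct) (auto simp: th_def distrib_left)
lemma th_of_nat: "th (of_nat n) = 0" by (simp add: th_def fps_of_nat[symmetric])
lemma th_neg1pow: "th ((-1) ^ n) = 0"
  by (induction n) (auto simp: th_mult th_def)
lemma th_inj: assumes "th f = th g" "fps_nth f 0 = fps_nth g 0" shows "f = g"
proof (rule fps_ext)
  fix N show "fps_nth f N = fps_nth g N"
  proof (cases N)
    case (Suc n)
    from arg_cong[OF assms(1), of "\<lambda>h. fps_nth h N"] show ?thesis by (simp add: th_nth Suc del: of_nat_Suc)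
  qed (use assms in auto)
qed

definition JJ :: "complex fps" where "JJ = Abs_fps (\<lambda>i. if odd i then 2 else 0)"

lemma th_aa_Suc: "th (aa (ks @ [Suc k])) = aa (ks @ [k])"
proof (rule fps_ext)
  fix N
  show "fps_nth (th (aa (ks @ [Suc k]))) N = fps_nth (aa (ks @ [k])) N"
    by (cases "N = 0") (auto simp: th_nth aa_def cc_snoc field_simps)
qed

lemma aa_Nil: "aa [] = 1"
  by (rule fps_ext) (simp add: aa_def cc_Nil)

lemma aa_nth0: "ks \<noteq> [] \<Longrightarrow> fps_nth (aa ks) 0 = 0"
  by (induction ks rule: rev_induct) (auto simp: aa_def cc_snoc)


lemma JJ_sum_aux:
  "(\<Sum>i=0..N. (if odd i then 2 else 0) * cc ks (N - i)) =
   (if N mod 2 = Suc (length ks) mod 2 then 2 * (\<Sum>M<N. cc ks M) else 0)"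
proof -
  have "(\<Sum>i=0..N. (if odd i then 2 else 0) * cc ks (N - i)) =
        (\<Sum>M=0..N. (if odd (N - M) then 2 else 0) * cc ks M)"
    by (subst sum.atLeastAtMost_rev) simp
  also have "\<dots> = (\<Sum>M=0..N. (if N mod 2 = Suc (length ks) mod 2 \<and> M < N then 2 * cc ks M else 0))"
  proof (rule sum.cong[OF refl])
    fix M assume M: "M \<in> {0..N}"
    show "(if odd (N - M) then 2 else 0) * cc ks M =
          (if N mod 2 = Suc (length ks) mod 2 \<and> M < N then 2 * cc ks M else 0)"
    proof (cases "cc ks M = 0")
      case False
      with cc_support have "M mod 2 = length ks mod 2" by blast
      with M have "odd (N - M) \<longleftrightarrow> (N mod 2 = Suc (length ks) mod 2 \<and> M < N)"
        by (auto simp: odd_iff_mod_2_eq_one) presburger+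
      then show ?thesis by simp
    qed simp
  qed
  also have "\<dots> = (\<Sum>M<Suc N. (if N mod 2 = Suc (length ks) mod 2 \<and> M < N then 2 * cc ks M else 0))"
    by (simp add: atLeast0AtMost lessThan_Suc_atMost)
  also have "\<dots> = (\<Sum>M<N. (if N mod 2 = Suc (length ks) mod 2 then 2 * cc ks M else 0))"
    by (simp add: sum.lessThan_Suc)
  also have "\<dots> = (if N mod 2 = Suc (length ks) mod 2 then 2 * (\<Sum>M<N. cc ks M) else 0)"
    by (simp add: sum_distrib_left)
  finally show ?thesis .
qed

lemma aa_zero: "aa (ks @ [0]) = JJ * aa ks"
proof (rule fps_ext)
  fix N
  have "fps_nth (JJ * aa ks) N = (\<Sum>i=0..N. complex_of_real ((if odd i then 2 else 0) * cc ks (N - i)))"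
    by (auto simp: fps_mult_nth JJ_def aa_def intro!: sum.cong)
  also have "\<dots> = complex_of_real (\<Sum>i=0..N. (if odd i then 2 else 0) * cc ks (N - i))"
    by simp
  also have "\<dots> = fps_nth (aa (ks @ [0])) N"
    by (subst JJ_sum_aux) (simp add: aa_def cc_snoc)
  finally show "fps_nth (aa (ks @ [0])) N = fps_nth (JJ * aa ks) N" ..
qed

lemma th_aa_one: "th (aa (ks @ [1])) = JJ * aa ks"
  using th_aa_Suc[of ks 0] by (simp add: aa_zero)

lemma th_aa_Suc0: "th (aa (ks @ [Suc 0])) = JJ * aa ks"
  using th_aa_one by simp



lemma sum_list_ge_length: "(\<forall>x\<in>set ks. 1 \<le> x) \<Longrightarrow> length ks \<le> sum_list ks"
  by (induction ks) auto

lemma sum_list_eq_length: "(\<forall>x\<in>set ks. 1 \<le> x) \<Longrightarrow> sum_list ks = length ks \<Longrightarrow> ks = replicate (length ks) 1"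
proof (induction ks)
  case (Cons x xs)
  have "length xs \<le> sum_list xs" using Cons.prems(1) by (intro sum_list_ge_length) auto
  with Cons.prems have "x = 1" "sum_list xs = length xs" by auto
  with Cons show ?case by auto
qed simp

lemma compositions_finite: "finite (compositions n r)"
proof (rule finite_subset)
  show "compositions n r \<subseteq> {ks. set ks \<subseteq> {..n} \<and> length ks = r}"
    by (auto simp: compositions_def intro: member_le_sum_list)
  show "finite {ks. set ks \<subseteq> {..n} \<and> length ks = r}"
    by (rule finite_lists_length_eq) simp
qed

lemma compositions_0: "compositions n 0 = (if n = 0 then {[]} else {})"
  by (auto simp: compositions_def)

lemma compositions_less: "n < r \<Longrightarrow> compositions n r = {}"
  using sum_list_ge_length by (fastforce simp: compositions_def)

lemma compositions_same: "compositions r r = {replicate r 1}"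
proof -
  have "ks = replicate r 1" if "ks \<in> compositions r r" for ks
    using that sum_list_eq_length[of ks] by (auto simp: compositions_def)
  moreover have "replicate r 1 \<in> compositions r r"
    by (auto simp: compositions_def sum_list_replicate)
  ultimately show ?thesis by blast
qed

definition incl :: "nat list \<Rightarrow> nat list" where "incl ks = butlast ks @ [Suc (last ks)]"

lemma compositions_nonempty: "ks \<in> compositions n (Suc q) \<Longrightarrow> ks \<noteq> []"
  unfolding compositions_def by auto

lemma sum_list_butlast_last: "ks \<noteq> [] \<Longrightarrow> sum_list ks = sum_list (butlast ks) + last ks"
  by (induction ks rule: rev_induct) auto

lemma compositions_split:
  "compositions (Suc n) (Suc q) = (\<lambda>ks. ks @ [1]) ` compositions n q \<union> incl ` compositions n (Suc q)"
proof (intro equalityI subsetI)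
  fix ks assume ks: "ks \<in> compositions (Suc n) (Suc q)"
  hence ne: "ks \<noteq> []" by (rule compositions_nonempty)
  have eq: "ks = butlast ks @ [last ks]" using ne by simp
  have lastge: "last ks \<ge> 1" using ks ne by (auto simp: compositions_def)
  have sl: "sum_list (butlast ks) + last ks = Suc n" using ks ne sum_list_butlast_last[OF ne]
    by (auto simp: compositions_def)
  have bl: "\<forall>x\<in>set (butlast ks). 1 \<le> x" using ks by (auto simp: compositions_def dest: in_set_butlastD)
  have lb: "length (butlast ks) = q" using ks by (auto simp: compositions_def)
  show "ks \<in> (\<lambda>ks. ks @ [1]) ` compositions n q \<union> incl ` compositions n (Suc q)"
  proof (cases "last ks = 1")
    case True
    have "butlast ks \<in> compositions n q" using sl bl lb True by (auto simp: compositions_def)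
    moreover have "ks = butlast ks @ [1]" using eq True by simp
    ultimately show ?thesis by blast
  next
    case False
    define ks' where "ks' = butlast ks @ [last ks - 1]"
    have "ks' \<in> compositions n (Suc q)" using sl bl lb False lastge
      by (auto simp: compositions_def ks'_def)
    moreover have "ks = incl ks'" using eq False lastge by (simp add: incl_def ks'_def)
    ultimately show ?thesis by blast
  qed
next
  fix ks assume "ks \<in> (\<lambda>ks. ks @ [1]) ` compositions n q \<union> incl ` compositions n (Suc q)"
  then show "ks \<in> compositions (Suc n) (Suc q)"
  proof
    assume "ks \<in> (\<lambda>ks. ks @ [1]) ` compositions n q"
    then show ?thesis by (auto simp: compositions_def)
  next
    assume "ks \<in> incl ` compositions n (Suc q)"
    then obtain ks' where ks': "ks' \<in> compositions n (Suc q)" "ks = incl ks'" by blast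
    hence ne: "ks' \<noteq> []" by (intro compositions_nonempty)
    show ?thesis using ks' sum_list_butlast_last[OF ne]
      by (auto simp: compositions_def incl_def dest: in_set_butlastD)
  qed
qed

lemma sum_compositions_split:
  "(\<Sum>ks\<in>compositions (Suc n) (Suc q). f ks) =
   (\<Sum>ks\<in>compositions n q. f (ks @ [1])) + (\<Sum>ks\<in>compositions n (Suc q). f (incl ks))"
proof -
  have inj1: "inj_on (\<lambda>ks. ks @ [1]) (compositions n q)" by (auto simp: inj_on_def)
  have inj2: "inj_on incl (compositions n (Suc q))"
  proof (rule inj_onI)
    fix x y assume x: "x \<in> compositions n (Suc q)" and y: "y \<in> compositions n (Suc q)" and "incl x = incl y"
    hence "butlast x = butlast y" "last x = last y" by (auto simp: incl_def)
    with compositions_nonempty[OF x] compositions_nonempty[OF y] show "x = y"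
      by (metis append_butlast_last_id)
  qed
  have disj: "(\<lambda>ks. ks @ [1]) ` compositions n q \<inter> incl ` compositions n (Suc q) = {}"
  proof -
    have "last (incl ks) \<noteq> 1" if "ks \<in> compositions n (Suc q)" for ks
    proof -
      have "ks \<noteq> []" using that by (rule compositions_nonempty)
      hence "last ks \<ge> 1" using that by (auto simp: compositions_def)
      thus ?thesis by (simp add: incl_def)
    qed
    hence "\<forall>ks'\<in>compositions n (Suc q). \<forall>ks. incl ks' \<noteq> ks @ [1]"
      by (metis last_snoc)
    show ?thesis
    proof (rule equals0I)
      fix x assume "x \<in> (\<lambda>ks. ks @ [1]) ` compositions n q \<inter> incl ` compositions n (Suc q)"
      then obtain a b where "x = a @ [1]" "b \<in> compositions n (Suc q)" "x = incl b" by blast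
      with \<open>\<forall>ks'\<in>compositions n (Suc q). \<forall>ks. incl ks' \<noteq> ks @ [1]\<close> show False by metis
    qed
  qed
  show ?thesis
    unfolding compositions_split
    apply (subst sum.union_disjoint[OF finite_imageI[OF compositions_finite] finite_imageI[OF compositions_finite] disj])
    apply (subst sum.reindex[OF inj1])
    apply (subst sum.reindex[OF inj2])
    apply (simp add: o_def)
    done
qed

definition E0 :: "nat \<Rightarrow> complex fps" where "E0 n = aa (replicate n 1)"
definition EE :: "nat \<Rightarrow> nat \<Rightarrow> complex fps" where "EE b k = aa (replicate b 1 @ [k])"
definition UU :: "nat \<Rightarrow> nat \<Rightarrow> complex fps" where "UU r n = (\<Sum>ks\<in>compositions n r. aa ks)"

lemma E0_0: "E0 0 = 1" by (simp add: E0_def aa_Nil)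
lemma th_E0: "th (E0 m) = (if m = 0 then 0 else JJ * E0 (m - 1))"
proof (cases m)
  case 0 then show ?thesis by (simp add: E0_0 th_def)
next
  case (Suc n)
  show ?thesis using th_aa_one[of "replicate n 1"] by (simp add: Suc E0_def replicate_append_same)
qed
lemma th_EE: "th (EE b (Suc k)) = EE b k" by (simp add: EE_def th_aa_Suc)
lemma EE_1: "EE b 1 = E0 (Suc b)"
  by (simp add: EE_def E0_def replicate_append_same)
lemma E0_nth0: "m > 0 \<Longrightarrow> fps_nth (E0 m) 0 = 0" by (simp add: E0_def aa_nth0)
lemma EE_nth0: "fps_nth (EE b k) 0 = 0" by (simp add: EE_def aa_nth0)

lemma th_UU: "th (UU (Suc q) (Suc n)) = JJ * UU q n + UU (Suc q) n"
proof -
  have "th (UU (Suc q) (Suc n)) = (\<Sum>ks\<in>compositions n q. th (aa (ks @ [1]))) +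
          (\<Sum>ks\<in>compositions n (Suc q). th (aa (incl ks)))"
    by (simp add: UU_def th_sum th_add sum_compositions_split)
  also have "(\<Sum>ks\<in>compositions n (Suc q). th (aa (incl ks))) = UU (Suc q) n"
    unfolding UU_def
  proof (rule sum.cong[OF refl])
    fix ks assume "ks \<in> compositions n (Suc q)"
    hence "ks \<noteq> []" by (rule compositions_nonempty)
    thus "th (aa (incl ks)) = aa ks" by (simp add: incl_def th_aa_Suc)
  qed
  finally show ?thesis by (simp add: th_aa_Suc0 UU_def sum_distrib_left)
qed

lemma E0_alt: "n \<ge> 1 \<Longrightarrow> (\<Sum>j\<le>n. (-1)^j * E0 (n - j) * E0 j) = 0"
proof (rule th_inj)
  assume n: "n \<ge> 1"
  then obtain p where p: "n = Suc p" by (cases n) auto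
  show "fps_nth (\<Sum>j\<le>n. (-1)^j * E0 (n - j) * E0 j) 0 = fps_nth 0 0"
  proof -
    have "fps_nth (E0 (n - j)) 0 * fps_nth (E0 j) 0 = 0" if "j \<le> n" for j
      using n that by (cases "j = 0") (auto simp: E0_nth0)
    thus ?thesis by (auto simp: fps_sum_nth intro!: sum.neutral)
  qed
  have A: "(\<Sum>j\<le>n. (-1)^j * th (E0 (n - j)) * E0 j) = JJ * (\<Sum>j\<le>p. (-1)^j * E0 (p - j) * E0 j)"
    unfolding p by (subst sum.atMost_Suc) (auto simp: th_E0 sum_distrib_left Suc_diff_le intro!: sum.cong)
  have B: "(\<Sum>j\<le>n. (-1)^j * E0 (n - j) * th (E0 j)) = - JJ * (\<Sum>j\<le>p. (-1)^j * E0 (p - j) * E0 j)"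
    unfolding p by (subst sum.atMost_Suc_shift) (auto simp: th_E0 sum_distrib_left sum_negf[symmetric] intro!: sum.cong)
  have "th (\<Sum>j\<le>n. (-1)^j * E0 (n - j) * E0 j) =
        (\<Sum>j\<le>n. (-1)^j * th (E0 (n - j)) * E0 j) + (\<Sum>j\<le>n. (-1)^j * E0 (n - j) * th (E0 j))"
    by (simp add: th_sum th_mult th_neg1pow sum.distrib algebra_simps)
  also have "\<dots> = 0" by (simp add: A B)
  finally show "th (\<Sum>j\<le>n. (-1)^j * E0 (n - j) * E0 j) = th 0" by (simp add: th_def)
qed



definition RS :: "nat \<Rightarrow> nat \<Rightarrow> complex fps" where
  "RS q k = (\<Sum>j\<le>q. (-1)^j * E0 (q - j) * EE j k)"

lemma RS_nth0: "fps_nth (RS q k) 0 = 0"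
  by (simp add: RS_def fps_sum_nth EE_nth0)

lemma UU_nth0: "fps_nth (UU (Suc q) n) 0 = 0"
  by (auto simp: UU_def fps_sum_nth aa_nth0 dest: compositions_nonempty intro!: sum.neutral)

lemma th_RS: "th (RS q (Suc k)) = (if q = 0 then 0 else JJ * RS (q - 1) (Suc k)) + RS q k"
proof -
  have "th (RS q (Suc k)) = (\<Sum>j\<le>q. (-1)^j * th (E0 (q - j)) * EE j (Suc k)) + RS q k"
    by (simp add: RS_def th_sum th_mult th_neg1pow th_EE sum.distrib algebra_simps)
  also have "(\<Sum>j\<le>q. (-1)^j * th (E0 (q - j)) * EE j (Suc k)) =
             (if q = 0 then 0 else JJ * RS (q - 1) (Suc k))"
  proof (cases q)
    case 0 then show ?thesis by (simp add: th_E0)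
  next
    case (Suc q')
    have "(\<Sum>j\<le>q. (-1)^j * th (E0 (q - j)) * EE j (Suc k)) =
          (\<Sum>j\<le>q'. (-1)^j * th (E0 (q - j)) * EE j (Suc k))"
      unfolding Suc by (subst sum.atMost_Suc) (simp add: th_E0)
    also have "\<dots> = JJ * RS q' (Suc k)"
      unfolding RS_def sum_distrib_left
      by (rule sum.cong[OF refl]) (auto simp: Suc th_E0 Suc_diff_le)
    finally show ?thesis by (simp add: Suc)
  qed
  finally show ?thesis .
qed

lemma RS_1: "RS q (Suc 0) = E0 (Suc q)"
proof -
  have "0 = (\<Sum>j\<le>Suc q. (-1)^j * E0 (Suc q - j) * E0 j)"
    using E0_alt[of "Suc q"] by simp
  also have "\<dots> = E0 (Suc q) - RS q (Suc 0)"
    by (subst sum.atMost_Suc_shift) (simp add: E0_0 RS_def EE_1[simplified] sum_negf[symmetric])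
  finally show ?thesis by simp
qed

lemma UU_same: "UU (Suc q) (Suc q) = E0 (Suc q)"
  by (simp add: UU_def compositions_same E0_def del: replicate_Suc)

lemma star: "UU (Suc q) (p + q + 1) = RS q (Suc p)"
proof (induction p arbitrary: q)
  case 0
  then show ?case by (simp add: UU_same RS_1)
next
  case (Suc p)
  note outer = Suc.IH
  show ?case
  proof (induction q)
    case 0
    show ?case
    proof (rule th_inj)
      show "fps_nth (UU (Suc 0) (Suc p + 0 + 1)) 0 = fps_nth (RS 0 (Suc (Suc p))) 0"
        by (simp add: UU_nth0 RS_nth0)
      have "th (UU (Suc 0) (Suc p + 0 + 1)) = JJ * UU 0 (Suc p) + UU (Suc 0) (Suc p)"
        using th_UU[of 0 "Suc p"] by simp
      also have "UU 0 (Suc p) = 0" by (simp add: UU_def compositions_0)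
      also have "UU (Suc 0) (Suc p) = RS 0 (Suc p)" using outer[of 0] by simp
      finally show "th (UU (Suc 0) (Suc p + 0 + 1)) = th (RS 0 (Suc (Suc p)))"
        by (simp add: th_RS)
    qed
  next
    case (Suc q)
    show ?case
    proof (rule th_inj)
      show "fps_nth (UU (Suc (Suc q)) (Suc p + Suc q + 1)) 0 = fps_nth (RS (Suc q) (Suc (Suc p))) 0"
        by (simp add: UU_nth0 RS_nth0)
      have "th (UU (Suc (Suc q)) (Suc p + Suc q + 1)) = JJ * UU (Suc q) (Suc p + Suc q) + UU (Suc (Suc q)) (Suc p + Suc q)"
        using th_UU[of "Suc q" "Suc p + Suc q"] by simp
      also have "UU (Suc q) (Suc p + Suc q) = RS q (Suc (Suc p))" using Suc.IH by simp
      also have "UU (Suc (Suc q)) (Suc p + Suc q) = RS (Suc q) (Suc p)" using outer[of "Suc q"] by simp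
      finally show "th (UU (Suc (Suc q)) (Suc p + Suc q + 1)) = th (RS (Suc q) (Suc (Suc p)))"
        by (simp add: th_RS)
    qed
  qed
qed



definition SS :: "nat \<Rightarrow> nat \<Rightarrow> nat \<Rightarrow> complex fps" where
  "SS m k r = (\<Sum>ks\<in>compositions (k + r - 1) r.
            of_nat ((last ks + m - 2) choose (m - 1)) * aa (butlast ks @ [last ks + m - 1]))"

definition LL :: "nat \<Rightarrow> nat \<Rightarrow> nat \<Rightarrow> complex fps" where
  "LL m k r = SS m k r + (-1) ^ r * SS k m r"

definition RR :: "nat \<Rightarrow> nat \<Rightarrow> nat \<Rightarrow> complex fps" where
  "RR m k r = (\<Sum>j=1..r-1. (-1) ^ (j - 1) *
            aa (replicate (r - 1 - j) 1 @ [m]) * aa (replicate (j - 1) 1 @ [k]))"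

lemma SS_split: "SS (Suc m') (Suc k') (Suc q) =
   (\<Sum>ks\<in>compositions (k' + q) q. aa (ks @ [Suc m'])) +
   (\<Sum>ks\<in>compositions (k' + q) (Suc q). of_nat ((last ks + m') choose m') * aa (butlast ks @ [last ks + Suc m']))"
proof -
  have "SS (Suc m') (Suc k') (Suc q) = (\<Sum>ks\<in>compositions (Suc (k' + q)) (Suc q).
            of_nat ((last ks + Suc m' - 2) choose m') * aa (butlast ks @ [last ks + m']))"
    by (simp add: SS_def)
  also have "\<dots> = (\<Sum>ks\<in>compositions (k' + q) q. aa (ks @ [Suc m'])) +
   (\<Sum>ks\<in>compositions (k' + q) (Suc q). of_nat ((last ks + m') choose m') * aa (butlast ks @ [last ks + Suc m']))"
    by (subst sum_compositions_split) (simp add: incl_def)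
  finally show ?thesis .
qed

lemma th_SS: "th (SS (Suc (Suc m')) (Suc k') (Suc q)) = SS (Suc m') (Suc k') (Suc q) + SS (Suc (Suc m')) k' (Suc q)"
proof -
  have A: "th (\<Sum>ks\<in>compositions (k' + q) q. aa (ks @ [Suc (Suc m')])) = (\<Sum>ks\<in>compositions (k' + q) q. aa (ks @ [Suc m']))"
    by (simp add: th_sum th_aa_Suc)
  have "th (\<Sum>ks\<in>compositions (k' + q) (Suc q). of_nat ((last ks + Suc m') choose Suc m') * aa (butlast ks @ [last ks + Suc (Suc m')]))
      = (\<Sum>ks\<in>compositions (k' + q) (Suc q). of_nat ((last ks + Suc m') choose Suc m') * aa (butlast ks @ [last ks + Suc m']))"
    by (simp only: th_sum th_mult th_of_nat th_aa_Suc[of _ "_ + Suc m'", simplified] add_Suc_right) simp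
  also have "\<dots> = (\<Sum>ks\<in>compositions (k' + q) (Suc q). of_nat ((last ks + m') choose m') * aa (butlast ks @ [last ks + Suc m']))
      + (\<Sum>ks\<in>compositions (k' + q) (Suc q). of_nat ((last ks + m') choose Suc m') * aa (butlast ks @ [last ks + Suc m']))"
    by (simp add: sum.distrib[symmetric] algebra_simps)
  also have "(\<Sum>ks\<in>compositions (k' + q) (Suc q). of_nat ((last ks + m') choose Suc m') * aa (butlast ks @ [last ks + Suc m']))
      = SS (Suc (Suc m')) k' (Suc q)"
    by (simp add: SS_def)
  finally have B: "th (\<Sum>ks\<in>compositions (k' + q) (Suc q). of_nat ((last ks + Suc m') choose Suc m') * aa (butlast ks @ [last ks + Suc (Suc m')]))
     = (\<Sum>ks\<in>compositions (k' + q) (Suc q). of_nat ((last ks + m') choose m') * aa (butlast ks @ [last ks + Suc m'])) + SS (Suc (Suc m')) k' (Suc q)" .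
  show ?thesis
    unfolding SS_split[of "Suc m'"] SS_split[of m'] th_add A B by (simp add: algebra_simps)
qed

lemma SS_nth0: "r \<ge> 1 \<Longrightarrow> fps_nth (SS m k r) 0 = 0"
  by (simp add: SS_def fps_sum_nth aa_nth0)

lemma RR_nth0: "fps_nth (RR m k r) 0 = 0"
  by (simp add: RR_def fps_sum_nth fps_mult_nth_0 aa_nth0)

lemma LL_nth0: "r \<ge> 1 \<Longrightarrow> fps_nth (LL m k r) 0 = 0"
  by (simp add: LL_def SS_nth0 fps_mult_nth_0)

lemma th_RR: "th (RR (Suc (Suc m')) (Suc (Suc k')) r) = RR (Suc m') (Suc (Suc k')) r + RR (Suc (Suc m')) (Suc k') r"
  by (simp add: RR_def th_sum th_mult th_neg1pow th_aa_Suc sum.distrib[symmetric] algebra_simps)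

lemma th_LL: "th (LL (Suc (Suc m')) (Suc (Suc k')) (Suc q)) = LL (Suc m') (Suc (Suc k')) (Suc q) + LL (Suc (Suc m')) (Suc k') (Suc q)"
  unfolding LL_def th_add th_mult th_neg1pow th_SS by (simp add: algebra_simps)

lemma LL_sym: "LL m k r = (-1)^r * LL k m r"
proof -
  have "(-1::complex fps)^r * (-1)^r = 1" by (simp add: power_mult_distrib[symmetric])
  thus ?thesis by (simp add: LL_def algebra_simps)
qed

lemma RR_sym: assumes "r \<ge> 1" shows "RR m k r = (-1)^r * RR k m r"
proof -
  have "RR k m r = (\<Sum>j=1..r-1. (-1) ^ (r - j - 1) *
            aa (replicate (j - 1) 1 @ [k]) * aa (replicate (r - 1 - j) 1 @ [m]))"
    unfolding RR_def
    by (subst sum.atLeastAtMost_rev) (rule sum.cong[OF refl], use assms in \<open>auto simp: Suc_diff_le\<close>)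
  also have "(-1)^r * \<dots> = RR m k r"
    unfolding RR_def sum_distrib_left
  proof (rule sum.cong[OF refl])
    fix j assume j: "j \<in> {1..r-1}"
    have "(-1::complex fps)^r * (-1) ^ (r - j - 1) = (-1)^(j-1)"
      using j by (simp add: power_add[symmetric] minus_one_power_iff) presburger
    thus "(-1)^r * ((-1) ^ (r - j - 1) * aa (replicate (j - 1) 1 @ [k]) * aa (replicate (r - 1 - j) 1 @ [m])) =
          (-1) ^ (j - 1) * aa (replicate (r - 1 - j) 1 @ [m]) * aa (replicate (j - 1) 1 @ [k])"
      by (simp add: algebra_simps)
  qed
  finally show ?thesis by simp
qed



lemma sum_from_1: "(\<Sum>j=1..q. f j) = (\<Sum>i<q. f (Suc i))"
  by (induction q) (simp_all add: sum.lessThan_Suc sum.cl_ivl_Suc)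

lemma butlast_rep: "butlast (replicate (Suc q) x) = replicate q x"
  by (induction q) auto

lemma LL_base: assumes "k \<ge> 1" "r \<ge> 1" shows "LL 1 k r = RR 1 k r"
proof -
  obtain p q where pq: "k = Suc p" "r = Suc q" using assms by (cases k; cases r) auto
  have S1: "SS 1 (Suc p) (Suc q) = UU (Suc q) (p + q + 1)"
    unfolding SS_def UU_def
    by (rule sum.cong) (auto dest: compositions_nonempty)
  have rep: "replicate (Suc q) (1::nat) = replicate q 1 @ [1]" by (simp add: replicate_append_same)
  have S2: "SS (Suc p) 1 (Suc q) = EE q (Suc p)"
    unfolding SS_def by (simp add: compositions_same EE_def butlast_rep del: replicate_Suc)
  have RS: "RS q (Suc p) = (\<Sum>i<q. (-1)^i * E0 (q - i) * EE i (Suc p)) + (-1)^q * EE q (Suc p)"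
    unfolding RS_def by (simp add: atMost_Suc lessThan_Suc_atMost[symmetric] sum.lessThan_Suc E0_0)
  have RR: "RR 1 (Suc p) (Suc q) = (\<Sum>i<q. (-1)^i * E0 (q - i) * EE i (Suc p))"
    unfolding RR_def sum_from_1 diff_Suc_1
  proof (rule sum.cong[OF refl])
    fix i assume i: "i \<in> {..<q}"
    have "q - i = Suc (q - Suc i)" using i by auto
    hence "E0 (q - i) = aa (replicate (q - Suc i) 1 @ [1])"
      by (simp add: E0_def replicate_append_same del: replicate_Suc) (simp add: replicate_append_same)
    thus "(-1) ^ i * aa (replicate (q - Suc i) 1 @ [1]) * aa (replicate i 1 @ [Suc p]) =
          (-1)^i * E0 (q - i) * EE i (Suc p)"
      by (simp add: EE_def)
  qed
  show ?thesis
    using star[of q p] unfolding pq LL_def S1 S2 RS RR by simp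
qed

lemma LL_RR: "1 \<le> m \<Longrightarrow> 1 \<le> k \<Longrightarrow> 1 \<le> r \<Longrightarrow> LL m k r = RR m k r"
proof (induction "m + k" arbitrary: m k rule: less_induct)
  case less
  show ?case
  proof (cases "m = 1")
    case True then show ?thesis using LL_base less.prems by simp
  next
    case m: False
    show ?thesis
    proof (cases "k = 1")
      case True
      have "LL m k r = (-1)^r * LL 1 m r" using True LL_sym[of m 1 r] by simp
      also have "\<dots> = (-1)^r * RR 1 m r" using LL_base[of m r] less.prems by simp
      also have "\<dots> = RR m k r" using RR_sym[of r m 1] less.prems True by (simp only:)
      finally show ?thesis .
    next
      case k: False
      have "\<exists>m'. m = Suc (Suc m')" using m less.prems(1) by presburger
      moreover have "\<exists>k'. k = Suc (Suc k')" using k less.prems(2) by presburger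
      moreover have "\<exists>q. r = Suc q" using less.prems(3) by presburger
      ultimately obtain m' k' q where mkq: "m = Suc (Suc m')" "k = Suc (Suc k')" "r = Suc q" by blast
      show ?thesis
      proof (rule th_inj)
        show "fps_nth (LL m k r) 0 = fps_nth (RR m k r) 0"
          using less.prems by (simp add: LL_nth0 RR_nth0)
        have "th (LL m k r) = LL (Suc m') (Suc (Suc k')) (Suc q) + LL (Suc (Suc m')) (Suc k') (Suc q)"
          unfolding mkq by (rule th_LL)
        also have "\<dots> = RR (Suc m') (Suc (Suc k')) (Suc q) + RR (Suc (Suc m')) (Suc k') (Suc q)"
          using less.hyps[of "Suc m'" "Suc (Suc k')"] less.hyps[of "Suc (Suc m')" "Suc k'"] mkq by simp
        also have "\<dots> = th (RR m k r)" unfolding mkq by (rule th_RR[symmetric])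
        finally show "th (LL m k r) = th (RR m k r)" .
      qed
    qed
  qed
qed



lemma conv_radius_cmp:
  fixes f g :: "complex fps"
  assumes "\<And>N. norm (fps_nth f N) \<le> norm (fps_nth g N)"
  shows "fps_conv_radius g \<le> fps_conv_radius f"
  unfolding fps_conv_radius_def
proof (rule conv_radius_geI_ex')
  fix r :: real assume r: "0 < r" "ereal r < conv_radius (fps_nth g)"
  have "summable (\<lambda>n. norm (fps_nth g n * of_real r ^ n))"
    by (rule abs_summable_in_conv_radius) (use r in simp)
  then show "summable (\<lambda>n. fps_nth f n * of_real r ^ n)"
    by (rule summable_comparison_test[rotated]) (unfold norm_mult, intro exI[of _ 0] allI impI mult_right_mono assms norm_ge_zero)
qed

lemma JJ_radius: "fps_conv_radius JJ \<ge> 1"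
  unfolding fps_conv_radius_def
proof (rule conv_radius_geI_ex')
  fix r :: real assume r: "0 < r" "ereal r < 1"
  have "summable (\<lambda>n. 2 * r ^ n)" using r by (intro summable_mult summable_geometric) auto
  then show "summable (\<lambda>n. fps_nth JJ n * of_real r ^ n)"
    by (rule summable_comparison_test[rotated]) (use r in \<open>auto simp: JJ_def norm_mult norm_power\<close>)
qed

lemma cc_Suc_le: "cc (ks @ [Suc k]) N \<le> cc (ks @ [k]) N"
proof (cases "N = 0")
  case False
  have S: "0 \<le> (\<Sum>M<N. cc ks M)" by (intro sum_nonneg cc_nonneg)
  have "2 / real N ^ Suc k * (\<Sum>M<N. cc ks M) = (2 / real N ^ k * (\<Sum>M<N. cc ks M)) / real N"
    by simp
  also have "\<dots> \<le> 2 / real N ^ k * (\<Sum>M<N. cc ks M)"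
  proof -
    define X where "X = 2 / real N ^ k * (\<Sum>M<N. cc ks M)"
    have X: "0 \<le> X" unfolding X_def using S by simp
    have N: "1 \<le> real N" using False by simp
    have "X * 1 \<le> X * real N" by (rule mult_left_mono[OF N X])
    hence "X / real N \<le> X" using N by (simp add: divide_le_eq)
    thus ?thesis unfolding X_def .
  qed
  finally show ?thesis by (simp add: cc_snoc)
qed (simp add: cc_snoc)

lemma aa_radius: "fps_conv_radius (aa ks) \<ge> 1"
proof (induction ks rule: rev_induct)
  case Nil then show ?case by (simp add: aa_Nil)
next
  case (snoc k ks)
  show ?case
  proof (induction k)
    case 0
    have "min (fps_conv_radius JJ) (fps_conv_radius (aa ks)) \<ge> 1" using JJ_radius snoc by simp
    also have "\<dots> \<le> fps_conv_radius (aa (ks @ [0]))" unfolding aa_zero by (rule fps_conv_radius_mult)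
    finally show ?case .
  next
    case (Suc k)
    have "fps_conv_radius (aa (ks @ [k])) \<le> fps_conv_radius (aa (ks @ [Suc k]))"
      by (rule conv_radius_cmp) (simp add: aa_def cc_Suc_le cc_nonneg)
    with Suc show ?case by simp
  qed
qed



definition lastz :: "nat list \<Rightarrow> nat" where "lastz ns = (if ns = [] then 0 else last ns)"
definition FF :: "nat \<Rightarrow> nat \<Rightarrow> nat list set" where "FF r N = {ns \<in> KT_indices r. lastz ns = N}"
definition ww :: "nat list \<Rightarrow> nat list \<Rightarrow> real" where
  "ww ks ns = 1 / (\<Prod>i<length ks. real (ns ! i) ^ (ks ! i))"

lemma sorted_le_last: "sorted_wrt (<) (ns :: nat list) \<Longrightarrow> x \<in> set ns \<Longrightarrow> x \<le> last ns"
  by (induction ns rule: rev_induct) (auto simp: sorted_wrt_append)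

lemma KT_le_lastz: "ns \<in> KT_indices r \<Longrightarrow> x \<in> set ns \<Longrightarrow> x \<le> lastz ns"
  unfolding KT_indices_def lastz_def using sorted_le_last by auto

lemma KT_0: "KT_indices 0 = {[]}"
  by (auto simp: KT_indices_def)

lemma KT_Suc_iff:
  "ns' \<in> KT_indices (Suc r) \<longleftrightarrow>
   (\<exists>ns n. ns' = ns @ [n] \<and> ns \<in> KT_indices r \<and> lastz ns < n \<and> n mod 2 = Suc r mod 2)"
proof
  assume A: "ns' \<in> KT_indices (Suc r)"
  hence len: "length ns' = Suc r" and so: "sorted_wrt (<) ns'" and ge: "\<forall>n\<in>set ns'. 1 \<le> n"
    and par: "\<forall>i<Suc r. ns' ! i mod 2 = (i + 1) mod 2" by (auto simp: KT_indices_def)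
  hence ne: "ns' \<noteq> []" by auto
  define ns where "ns = butlast ns'"
  define n where "n = last ns'"
  have eq: "ns' = ns @ [n]" using ne by (simp add: ns_def n_def)
  have lenns: "length ns = r" using len by (simp add: ns_def)
  have so2: "sorted_wrt (<) ns" "\<forall>x\<in>set ns. x < n" using so unfolding eq by (auto simp: sorted_wrt_append)
  have ge2: "\<forall>x\<in>set ns. 1 \<le> x" "1 \<le> n" using ge unfolding eq by auto
  have par2: "\<forall>i<r. ns ! i mod 2 = (i + 1) mod 2"
  proof (intro allI impI)
    fix i assume "i < r"
    with par have "ns' ! i mod 2 = (i + 1) mod 2" by auto
    thus "ns ! i mod 2 = (i + 1) mod 2" using \<open>i < r\<close> lenns by (simp add: eq nth_append)
  qed
  have parn: "n mod 2 = Suc r mod 2" using par[rule_format, of r] lenns by (simp add: eq nth_append)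
  have "lastz ns < n"
  proof (cases "ns = []")
    case True then show ?thesis using ge2 by (simp add: lastz_def)
  next
    case False then show ?thesis using so2 by (simp add: lastz_def)
  qed
  moreover have "ns \<in> KT_indices r" using lenns so2 ge2 par2 by (simp add: KT_indices_def)
  ultimately show "\<exists>ns n. ns' = ns @ [n] \<and> ns \<in> KT_indices r \<and> lastz ns < n \<and> n mod 2 = Suc r mod 2"
    using eq parn by blast
next
  assume "\<exists>ns n. ns' = ns @ [n] \<and> ns \<in> KT_indices r \<and> lastz ns < n \<and> n mod 2 = Suc r mod 2"
  then obtain ns n where eq: "ns' = ns @ [n]" and ns: "ns \<in> KT_indices r" and lt: "lastz ns < n"
    and parn: "n mod 2 = Suc r mod 2" by blast
  have lenns: "length ns = r" using ns by (simp add: KT_indices_def)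
  have lt2: "\<forall>x\<in>set ns. x < n" using KT_le_lastz[OF ns] lt by fastforce
  have "sorted_wrt (<) ns'" using ns lt2 by (simp add: eq sorted_wrt_append KT_indices_def)
  moreover have "\<forall>x\<in>set ns'. 1 \<le> x" using ns lt by (auto simp: eq KT_indices_def)
  moreover have "\<forall>i<Suc r. ns' ! i mod 2 = (i + 1) mod 2"
  proof (intro allI impI)
    fix i assume "i < Suc r"
    then consider "i < r" | "i = r" by linarith
    then show "ns' ! i mod 2 = (i + 1) mod 2"
    proof cases
      case 1 then show ?thesis using ns lenns by (simp add: eq nth_append KT_indices_def)
    next
      case 2 then show ?thesis using parn lenns by (simp add: eq nth_append)
    qed
  qed
  moreover have "length ns' = Suc r" using lenns eq by simp
  ultimately show "ns' \<in> KT_indices (Suc r)" by (simp add: KT_indices_def)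
qed

lemma finite_KT_bounded: "finite {ns \<in> KT_indices r. lastz ns \<le> N}"
proof (rule finite_subset)
  show "{ns \<in> KT_indices r. lastz ns \<le> N} \<subseteq> {ns. set ns \<subseteq> {..N} \<and> length ns = r}"
    using KT_le_lastz by (fastforce simp: KT_indices_def)
  show "finite {ns. set ns \<subseteq> {..N} \<and> length ns = r}" by (rule finite_lists_length_eq) simp
qed

lemma finite_FF: "finite (FF r N)"
  by (rule finite_subset[OF _ finite_KT_bounded[of r N]]) (auto simp: FF_def)

lemma finite_KT_less: "finite {ns \<in> KT_indices r. lastz ns < N}"
  by (rule finite_subset[OF _ finite_KT_bounded[of r N]]) auto

lemma FF_Suc: "FF (Suc r) N = (\<lambda>ns. ns @ [N]) ` {ns \<in> KT_indices r. lastz ns < N \<and> N mod 2 = Suc r mod 2}"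
  unfolding FF_def by (auto simp: KT_Suc_iff lastz_def)

lemma ww_snoc: "length ns = length ks \<Longrightarrow> ww (ks @ [k]) (ns @ [N]) = ww ks ns / real N ^ k"
  by (simp add: ww_def prod.lessThan_Suc nth_append)

lemma cc_FF: "cc ks N = 2 ^ length ks * (\<Sum>ns\<in>FF (length ks) N. ww ks ns)"
proof (induction ks arbitrary: N rule: rev_induct)
  case Nil
  have "FF 0 N = (if N = 0 then {[]} else {})" by (auto simp: FF_def KT_0 lastz_def)
  then show ?case by (simp add: cc_Nil ww_def)
next
  case (snoc k ks)
  define r where "r = length ks"
  define G where "G = {ns \<in> KT_indices r. lastz ns < N}"
  have inj: "inj_on (\<lambda>ns. ns @ [N]) A" for A by (auto simp: inj_on_def)
  have lenG: "ns \<in> G \<Longrightarrow> length ns = length ks" for ns by (auto simp: G_def r_def KT_indices_def)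
  have "(\<Sum>ns\<in>FF (Suc r) N. ww (ks @ [k]) ns) =
        (\<Sum>ns\<in>{ns \<in> KT_indices r. lastz ns < N \<and> N mod 2 = Suc r mod 2}. ww (ks @ [k]) (ns @ [N]))"
    unfolding FF_Suc by (simp add: sum.reindex[OF inj])
  also have "\<dots> = (if N mod 2 = Suc r mod 2 then (\<Sum>ns\<in>G. ww ks ns / real N ^ k) else 0)"
    by (auto simp: G_def ww_snoc r_def KT_indices_def intro!: sum.cong)
  also have "(\<Sum>ns\<in>G. ww ks ns / real N ^ k) = (\<Sum>M<N. (\<Sum>ns\<in>FF r M. ww ks ns)) / real N ^ k"
  proof -
    have "(\<Sum>ns\<in>G. ww ks ns) = (\<Sum>M<N. (\<Sum>ns\<in>{x. x \<in> G \<and> lastz x = M}. ww ks ns))"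
      by (rule sum.group[symmetric]) (auto simp: G_def finite_KT_less)
    also have "\<dots> = (\<Sum>M<N. (\<Sum>ns\<in>FF r M. ww ks ns))"
      by (rule sum.cong[OF refl]) (rule sum.cong, auto simp: G_def FF_def)
    finally show ?thesis by (subst sum_divide_distrib[symmetric]) simp
  qed
  finally have X: "(\<Sum>ns\<in>FF (Suc r) N. ww (ks @ [k]) ns) =
     (if N mod 2 = Suc r mod 2 then (\<Sum>M<N. (\<Sum>ns\<in>FF r M. ww ks ns)) / real N ^ k else 0)" .
  show ?case
    unfolding cc_snoc snoc.IH length_append_singleton r_def[symmetric] X
    by (simp add: sum_distrib_left[symmetric])
qed



lemma ww_nonneg: "ww ks ns \<ge> 0"
  by (simp add: ww_def prod_nonneg)

lemma KT_A_eval: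
  assumes z: "norm z < 1"
  shows "KT_A ks z = eval_fps (aa ks) z"
proof -
  define r where "r = length ks"
  define b where "b N = (\<Sum>ns\<in>FF r N. ww ks ns)" for N
  have ccb: "cc ks N = 2 ^ r * b N" for N unfolding b_def r_def by (rule cc_FF)
  have bnn: "b N \<ge> 0" for N unfolding b_def by (intro sum_nonneg ww_nonneg)
  have rad: "ereal (norm z) < fps_conv_radius (aa ks)"
    using aa_radius[of ks] z by (meson ereal_less_eq(3) less_le_trans ereal_less(3))
  have sumn: "summable (\<lambda>N. norm (fps_nth (aa ks) N * z ^ N))"
    by (rule norm_summable_fps[OF rad])
  have nth: "fps_nth (aa ks) N = complex_of_real (2 ^ r) * complex_of_real (b N)" for N
    by (simp add: aa_def ccb)
  have eqn: "(\<lambda>N. norm (complex_of_real (b N) * z ^ N)) = (\<lambda>N. norm (fps_nth (aa ks) N * z ^ N) / 2 ^ r)"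
    by (rule ext) (simp add: nth norm_mult norm_power)
  have sumb: "summable (\<lambda>N. norm (complex_of_real (b N) * z ^ N))"
    unfolding eqn by (rule summable_divide[OF sumn])
  define S where "S = (\<Sum>N. complex_of_real (b N) * z ^ N)"
  have hasS: "((\<lambda>N. complex_of_real (b N) * z ^ N) has_sum S) UNIV"
    unfolding S_def by (rule norm_summable_imp_has_sum[OF sumb summable_sums[OF summable_norm_cancel[OF sumb]]])
  define g where "g p = z ^ (fst p) * complex_of_real (ww ks (snd p))" for p
  have fiber: "((\<lambda>ns. g (N, ns)) has_sum (complex_of_real (b N) * z ^ N)) (FF r N)" for N
    by (rule has_sum_finiteI[OF finite_FF]) (simp add: g_def b_def sum_distrib_left mult.commute)
  have normfib: "infsum (\<lambda>ns. norm (g (N, ns))) (FF r N) = norm (complex_of_real (b N) * z ^ N)" for N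
  proof -
    have "infsum (\<lambda>ns. norm (g (N, ns))) (FF r N) = (\<Sum>ns\<in>FF r N. norm z ^ N * ww ks ns)"
      by (simp add: finite_FF g_def norm_mult norm_power ww_nonneg)
    also have "\<dots> = norm z ^ N * b N"
      by (simp add: b_def sum_distrib_left)
    also have "\<dots> = norm (complex_of_real (b N) * z ^ N)"
      using bnn[of N] by (simp add: norm_mult norm_power)
    finally show ?thesis .
  qed
  have abs: "(\<lambda>p. norm (g p)) summable_on Sigma UNIV (FF r)"
  proof (subst Infinite_Sum.abs_summable_on_Sigma_iff, intro conjI ballI)
    fix N show "(\<lambda>ns. norm (g (N, ns))) summable_on FF r N" by (simp add: finite_FF)
  next
    have "(\<lambda>N. norm (complex_of_real (b N) * z ^ N)) summable_on UNIV"
      using sumb by (subst summable_on_UNIV_nonneg_real_iff) auto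
    thus "(\<lambda>N. norm (infsum (\<lambda>ns. norm (g (N, ns))) (FF r N))) summable_on UNIV"
      by (simp add: normfib)
  qed
  have summ: "g summable_on Sigma UNIV (FF r)" by (rule abs_summable_summable[OF abs])
  have hasG: "(g has_sum S) (Sigma UNIV (FF r))"
    by (rule has_sum_SigmaI[OF fiber hasS summ])
  have bij: "bij_betw (\<lambda>ns. (lastz ns, ns)) (KT_indices r) (Sigma UNIV (FF r))"
    unfolding bij_betw_def by (auto simp: inj_on_def FF_def image_iff)
  have hasT: "((\<lambda>ns. g (lastz ns, ns)) has_sum S) (KT_indices r)"
    using has_sum_reindex_bij_betw[OF bij, of g S] hasG by simp
  have tm: "g (lastz ns, ns) = z ^ (if ns = [] then 0 else last ns) /
        (\<Prod>i<length ks. of_nat (ns ! i) ^ (ks ! i))" for ns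
    by (simp add: g_def lastz_def ww_def divide_inverse)
  have "KT_A ks z = 2 ^ r * S"
    unfolding KT_A_def r_def[symmetric]
    using infsumI[OF hasT] by (simp add: tm r_def)
  also have "\<dots> = eval_fps (aa ks) z"
    unfolding eval_fps_def S_def nth
    by (subst suminf_mult[OF summable_norm_cancel[OF sumb], symmetric]) (simp add: mult.assoc)
  finally show ?thesis .
qed



definition good :: "complex fps \<Rightarrow> bool" where "good f \<longleftrightarrow> 1 \<le> fps_conv_radius f"

lemma good_aa: "good (aa ks)" by (simp add: good_def aa_radius)
lemma good_const: "good (fps_const c)" by (simp add: good_def)
lemma good_mult: "good f \<Longrightarrow> good g \<Longrightarrow> good (f * g)"
  unfolding good_def by (rule order.trans[OF _ fps_conv_radius_mult]) simp
lemma good_add: "good f \<Longrightarrow> good g \<Longrightarrow> good (f + g)"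
  unfolding good_def by (rule order.trans[OF _ fps_conv_radius_add]) simp
lemma good_sum: "(\<And>x. x \<in> A \<Longrightarrow> good (f x)) \<Longrightarrow> good (sum f A)"
proof (induction A rule: infinite_finite_induct)
  case (insert x F) thus ?case by (simp add: good_add)
qed (simp_all add: good_def)

lemma of_nat_fps: "(of_nat n :: complex fps) = fps_const (of_nat n)" by (simp add: fps_of_nat)
lemma neg1pow_fps: "(-1 :: complex fps) ^ n = fps_const ((-1) ^ n)"
  by (induction n) (simp_all flip: fps_const_mult fps_const_neg)

context fixes z :: complex assumes z: "norm z < 1"
begin

lemma good_lt: "good f \<Longrightarrow> ereal (norm z) < fps_conv_radius f"
  unfolding good_def using z by (meson ereal_less_eq(3) less_le_trans ereal_less(3))

lemma ev_mult: "good f \<Longrightarrow> good g \<Longrightarrow> eval_fps (f * g) z = eval_fps f z * eval_fps g z"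
  by (intro eval_fps_mult good_lt)

lemma ev_add: "good f \<Longrightarrow> good g \<Longrightarrow> eval_fps (f + g) z = eval_fps f z + eval_fps g z"
  by (intro eval_fps_add good_lt)

lemma ev_sum: "(\<And>x. x \<in> A \<Longrightarrow> good (f x)) \<Longrightarrow> eval_fps (sum f A) z = (\<Sum>x\<in>A. eval_fps (f x) z)"
proof (induction A rule: infinite_finite_induct)
  case (insert x F)
  then show ?case by (simp add: ev_add good_sum)
qed simp_all

end

theorem mainTheorem15:
  fixes m k r :: nat and z :: complex
  assumes "1 \<le> m" and "1 \<le> k" and "1 \<le> r" and "norm z < 1"
  shows "(\<Sum>ks\<in>compositions (k + r - 1) r.
            of_nat ((last ks + m - 2) choose (m - 1)) * KT_A (butlast ks @ [last ks + m - 1]) z)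
       + (-1) ^ r * (\<Sum>ks\<in>compositions (m + r - 1) r.
            of_nat ((last ks + k - 2) choose (k - 1)) * KT_A (butlast ks @ [last ks + k - 1]) z)
       = (\<Sum>j=1..r-1. (-1) ^ (j - 1) *
            KT_A (replicate (r - 1 - j) 1 @ [m]) z * KT_A (replicate (j - 1) 1 @ [k]) z)"
proof -
  note z = assms(4)
  have eS: "eval_fps (SS a b r) z = (\<Sum>ks\<in>compositions (b + r - 1) r.
            of_nat ((last ks + a - 2) choose (a - 1)) * KT_A (butlast ks @ [last ks + a - 1]) z)" for a b
    unfolding SS_def of_nat_fps
    by (subst ev_sum[OF z]) (auto intro!: good_mult good_const good_aa sum.cong
         simp: ev_mult[OF z] good_const good_aa KT_A_eval[OF z])
  have gS: "good (SS a b r)" for a b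
    unfolding SS_def of_nat_fps by (auto intro!: good_sum good_mult good_const good_aa)
  have eL: "eval_fps (LL m k r) z = eval_fps (SS m k r) z + (-1)^r * eval_fps (SS k m r) z"
    unfolding LL_def neg1pow_fps
    by (simp add: ev_add[OF z] ev_mult[OF z] good_mult good_const gS)
  have eR: "eval_fps (RR m k r) z = (\<Sum>j=1..r-1. (-1) ^ (j - 1) *
            KT_A (replicate (r - 1 - j) 1 @ [m]) z * KT_A (replicate (j - 1) 1 @ [k]) z)"
    unfolding RR_def neg1pow_fps
    by (subst ev_sum[OF z]) (auto intro!: good_mult good_const good_aa sum.cong
         simp: ev_mult[OF z] good_mult good_const good_aa KT_A_eval[OF z])
  show ?thesis
    using LL_RR[OF assms(1-3)] eL eR eS[of m k] eS[of k m] by simp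
qed


end
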